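(* Fix any choice function assigning to each nonempty literal $A$ a symbol $a_A\in A$, and write $\partial_A(r):=\partial_{a_A}(r)$. Then for all extended regular expressions $r$ and $s$: \[\llbracket r\rrbracket\subseteq\llbracket s\rrbracket\iff\big(\nu(r)\Rightarrow\nu(s)\big)\ \wedge\ \big(\forall A\in\mathrm{next}(r)\ltimes\mathrm{next}(s),\ A\neq\emptyset:\ \llbracket\partial_A(r)\rrbracket\subseteq\llbracket\partial_A(s)\rrbracket\big).\]
   Context: $\Sigma$ is a countable (possibly infinite) alphabet, $\Sigma^*$ the set of finite words, $\epsilon$ the empty word. Literals are sets of symbols drawn from a fixed family $U\subseteq\mathcal P(\Sigma)$ containing $\emptyset$, $\Sigma$ and all singletons and closed under union, intersection and complement $\overline{A}=\Sigma\setminus A$. Extended regular expressions (EREs) are generated by $r,s ::= \epsilon \mid A \mid r+s \mid r\cdot s \mid r^* \mid r\,\&\,s \mid \neg r$ with $A$ a literal; the empty literal is written $\emptyset$. Semantics: $\llbracket\epsilon\rrbracket=\{\epsilon\}$, $\llbracket A\rrbracket=A$, $\llbracket r+s\rrbracket=\llbracket r\rrbracket\cup\llbracket s\rrbracket$, $\llbracket r\cdot s\rrbracket$ the concatenation, $\llbracket r^*\rrbracket=\llbracket r\rrbracket^*$, $\llbracket r\&s\rrbracket=\llbracket r\rrbracket\cap\llbracket s\rrbracket$, $\llbracket\neg r\rrbracket=\Sigma^*\setminus\llbracket r\rrbracket$. Nullability: $\nu(\epsilon)=\nu(r^* )=\mathit{true}$, $\nu(A)=\mathit{false}$, $\nu(r+s)=\nu(r)\vee\nu(s)$,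 $\nu(r\cdot s)=\nu(r\&s)=\nu(r)\wedge\nu(s)$, $\nu(\neg r)=\neg\nu(r)$. Brzozowski derivative for $a\in\Sigma$: $\partial_a(\epsilon)=\emptyset$; $\partial_a(A)=\epsilon$ if $a\in A$, else $\emptyset$; $\partial_a(r+s)=\partial_a(r)+\partial_a(s)$; $\partial_a(r\cdot s)=\partial_a(r)\cdot s+\partial_a(s)$ if $\nu(r)$, and $\partial_a(r)\cdot s$ otherwise; $\partial_a(r^* )=\partial_a(r)\cdot r^*$; $\partial_a(r\&s)=\partial_a(r)\&\partial_a(s)$; $\partial_a(\neg r)=\neg\partial_a(r)$. Join: $\mathfrak L_1\Join\mathfrak L_2=\{A_1\cap A_2,\ A_1\cap\overline{\bigcup\mathfrak L_2},\ \overline{\bigcup\mathfrak L_1}\cap A_2 \mid A_1\in\mathfrak L_1, A_2\in\mathfrak L_2\}$; left join $\mathfrak L_1\ltimes\mathfrak L_2=\{A_1\cap A_2,\ A_1\cap\overline{\bigcup\mathfrak L_2}\mid A_1\in\mathfrak L_1, A_2\in\mathfrak L_2\}$; $\mathfrak L_1\sqcap\mathfrak L_2=\{A_1\cap A_2\mid A_1\in\mathfrak L_1,A_2\in\mathfrak L_2\}$. Next literals: $\mathrm{next}(\epsilon)=\{\emptyset\}$; $\mathrm{next}(A)=\{A\}$; $\mathrm{next}(r+s)=\mathrm{next}(r)\Join\mathrm{next}(s)$; $\mathrm{next}(r\cdot s)=\mathrm{next}(r)\Join\mathrm{next}(s)$ if $\nu(r)$ and $\mathrm{next}(r)$ otherwise;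 $\mathrm{next}(r^* )=\mathrm{next}(r)$; $\mathrm{next}(r\&s)=\mathrm{next}(r)\sqcap\mathrm{next}(s)$; $\mathrm{next}(\neg r)=\mathrm{next}(r)\cup\{\bigcap_{A\in\mathrm{next}(r)}\overline{A}\}$. *)

theory Defs
  imports "HOL-Library.Countable"
begin

text \<open>Alphabet: a countable type 'a (Sigma = UNIV). Literals are sets of symbols.\<close>

datatype 'a ere =
    Eps
  | Lit "'a set"
  | Alt "'a ere" "'a ere"
  | Cat "'a ere" "'a ere"
  | Star "'a ere"
  | Inter "'a ere" "'a ere"
  | Neg "'a ere"

definition literal_family :: "'a set set \<Rightarrow> bool" where
  "literal_family U \<longleftrightarrow> {} \<in> U \<and> UNIV \<in> U \<and> (\<forall>a. {a} \<in> U) \<and>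
     (\<forall>A\<in>U. \<forall>B\<in>U. A \<union> B \<in> U) \<and> (\<forall>A\<in>U. \<forall>B\<in>U. A \<inter> B \<in> U) \<and>
     (\<forall>A\<in>U. - A \<in> U)"

fun lits :: "'a ere \<Rightarrow> 'a set set" where
  "lits Eps = {}"
| "lits (Lit A) = {A}"
| "lits (Alt r s) = lits r \<union> lits s"
| "lits (Cat r s) = lits r \<union> lits s"
| "lits (Star r) = lits r"
| "lits (Inter r s) = lits r \<union> lits s"
| "lits (Neg r) = lits r"

definition conc :: "'a list set \<Rightarrow> 'a list set \<Rightarrow> 'a list set" where
  "conc L M = {xs @ ys | xs ys. xs \<in> L \<and> ys \<in> M}"

inductive_set kstar :: "'a list set \<Rightarrow> 'a list set" for L where
  kstar_Nil: "[] \<in> kstar L"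
| kstar_app: "xs \<in> L \<Longrightarrow> ys \<in> kstar L \<Longrightarrow> xs @ ys \<in> kstar L"

fun lang :: "'a ere \<Rightarrow> 'a list set" where
  "lang Eps = {[]}"
| "lang (Lit A) = {[a] | a. a \<in> A}"
| "lang (Alt r s) = lang r \<union> lang s"
| "lang (Cat r s) = conc (lang r) (lang s)"
| "lang (Star r) = kstar (lang r)"
| "lang (Inter r s) = lang r \<inter> lang s"
| "lang (Neg r) = - lang r"

fun nullable :: "'a ere \<Rightarrow> bool" where
  "nullable Eps = True"
| "nullable (Lit A) = False"
| "nullable (Alt r s) = (nullable r \<or> nullable s)"
| "nullable (Cat r s) = (nullable r \<and> nullable s)"
| "nullable (Star r) = True"
| "nullable (Inter r s) = (nullable r \<and> nullable s)"
| "nullable (Neg r) = (\<not> nullable r)"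

fun deriv :: "'a \<Rightarrow> 'a ere \<Rightarrow> 'a ere" where
  "deriv a Eps = Lit {}"
| "deriv a (Lit A) = (if a \<in> A then Eps else Lit {})"
| "deriv a (Alt r s) = Alt (deriv a r) (deriv a s)"
| "deriv a (Cat r s) = (if nullable r then Alt (Cat (deriv a r) s) (deriv a s)
                        else Cat (deriv a r) s)"
| "deriv a (Star r) = Cat (deriv a r) (Star r)"
| "deriv a (Inter r s) = Inter (deriv a r) (deriv a s)"
| "deriv a (Neg r) = Neg (deriv a r)"

definition join :: "'a set set \<Rightarrow> 'a set set \<Rightarrow> 'a set set" where
  "join L1 L2 = {A1 \<inter> A2 | A1 A2. A1 \<in> L1 \<and> A2 \<in> L2}
              \<union> {A1 \<inter> - \<Union>L2 | A1 A2. A1 \<in> L1 \<and> A2 \<in> L2}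
              \<union> {- \<Union>L1 \<inter> A2 | A1 A2. A1 \<in> L1 \<and> A2 \<in> L2}"

definition ljoin :: "'a set set \<Rightarrow> 'a set set \<Rightarrow> 'a set set" where
  "ljoin L1 L2 = {A1 \<inter> A2 | A1 A2. A1 \<in> L1 \<and> A2 \<in> L2}
              \<union> {A1 \<inter> - \<Union>L2 | A1 A2. A1 \<in> L1 \<and> A2 \<in> L2}"

definition meet :: "'a set set \<Rightarrow> 'a set set \<Rightarrow> 'a set set" where
  "meet L1 L2 = {A1 \<inter> A2 | A1 A2. A1 \<in> L1 \<and> A2 \<in> L2}"

fun next_lits :: "'a ere \<Rightarrow> 'a set set" where
  "next_lits Eps = {{}}"
| "next_lits (Lit A) = {A}"
| "next_lits (Alt r s) = join (next_lits r) (next_lits s)"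
| "next_lits (Cat r s) = (if nullable r then join (next_lits r) (next_lits s)
                          else next_lits r)"
| "next_lits (Star r) = next_lits r"
| "next_lits (Inter r s) = meet (next_lits r) (next_lits s)"
| "next_lits (Neg r) = next_lits r \<union> {\<Inter>A\<in>next_lits r. - A}"

end

theory Submission
  imports Defs
begin

lemma nullable_iff: "nullable r \<longleftrightarrow> [] \<in> lang r"
  by (induction r) (auto simp: conc_def intro: kstar.intros)

lemma conc_Cons: "a # w \<in> conc L M \<longleftrightarrow>
   (\<exists>u v. w = u @ v \<and> a # u \<in> L \<and> v \<in> M) \<or> ([] \<in> L \<and> a # w \<in> M)"
  unfolding conc_def
  apply (rule iffI)
   apply (clarsimp, metis Cons_eq_append_conv)
  apply (elim disjE exE conjE)
   apply (simp, rule_tac x="a#u" in exI, rule_tac x=v in exI, simp)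
  apply (simp, rule_tac x="[]" in exI, rule_tac x="a#w" in exI, simp)
  done

lemma kstar_Cons_D: "x \<in> kstar L \<Longrightarrow> x = a # w \<Longrightarrow> (\<exists>u v. w = u @ v \<and> a # u \<in> L \<and> v \<in> kstar L)"
proof (induction arbitrary: w rule: kstar.induct)
  case kstar_Nil then show ?case by simp
next
  case (kstar_app xs ys)
  show ?case
  proof (cases xs)
    case Nil then show ?thesis using kstar_app by simp
  next
    case (Cons b u)
    then show ?thesis using kstar_app by auto
  qed
qed

lemma kstar_Cons: "a # w \<in> kstar L \<longleftrightarrow> (\<exists>u v. w = u @ v \<and> a # u \<in> L \<and> v \<in> kstar L)"
  using kstar_Cons_D[of "a#w" L a w] kstar.kstar_app[of "a#_" L] by fastforce

lemma lang_deriv: "lang (deriv a r) = {w. a # w \<in> lang r}"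
proof (induction r)
  case (Cat r s)
  then show ?case by (auto simp: conc_Cons nullable_iff) (auto simp: conc_def)
next
  case (Star r)
  then show ?case by (auto simp: kstar_Cons) (auto simp: conc_def)
qed auto

lemma conc_empty[simp]: "conc {} M = {}" by (simp add: conc_def)

lemma next_ne: "next_lits r \<noteq> {}"
  by (induction r) (auto simp: join_def meet_def)

lemma join_cell:
  assumes "A \<in> join L1 L2" "a \<in> A" "b \<in> A"
    "\<forall>A\<in>L1. \<forall>a\<in>A. \<forall>b\<in>A. f a = f b" "\<forall>a. a \<notin> \<Union>L1 \<longrightarrow> f a = {}"
    "\<forall>A\<in>L2. \<forall>a\<in>A. \<forall>b\<in>A. g a = g b" "\<forall>a. a \<notin> \<Union>L2 \<longrightarrow> g a = {}"
  shows "f a = f b \<and> g a = g b"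
proof -
  from assms(1) obtain A1 A2 where A: "A1 \<in> L1" "A2 \<in> L2"
    "A = A1 \<inter> A2 \<or> A = A1 \<inter> - \<Union>L2 \<or> A = - \<Union>L1 \<inter> A2"
    unfolding join_def by blast
  from A(3) show ?thesis
  proof (elim disjE)
    assume "A = A1 \<inter> A2" then show ?thesis using assms(2-7) A(1,2) by (metis IntD1 IntD2)
  next
    assume "A = A1 \<inter> - \<Union>L2"
    then have "a \<in> A1" "b \<in> A1" "a \<notin> \<Union>L2" "b \<notin> \<Union>L2" using assms(2,3) by auto
    then show ?thesis using assms(4-7) A(1) by metis
  next
    assume "A = - \<Union>L1 \<inter> A2"
    then have "a \<in> A2" "b \<in> A2" "a \<notin> \<Union>L1" "b \<notin> \<Union>L1" using assms(2,3) by auto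
    then show ?thesis using assms(4-7) A(2) by metis
  qed
qed

lemma join_out:
  assumes "a \<notin> \<Union>(join L1 L2)" "L1 \<noteq> {}" "L2 \<noteq> {}"
  shows "a \<notin> \<Union>L1 \<and> a \<notin> \<Union>L2"
proof (rule ccontr)
  assume "\<not> ?thesis"
  then consider A1 where "A1 \<in> L1" "a \<in> A1" | A2 where "A2 \<in> L2" "a \<in> A2" by blast
  then show False
  proof cases
    case (1 A1)
    obtain A2 where A2: "A2 \<in> L2" using assms(3) by blast
    show False
    proof (cases "a \<in> \<Union>L2")
      case True then obtain B where "B \<in> L2" "a \<in> B" by blast
      then have "A1 \<inter> B \<in> join L1 L2" using 1 unfolding join_def by blast
      then show False using assms(1) 1 \<open>a \<in> B\<close> by blast
    next
      case False
      then have "A1 \<inter> - \<Union>L2 \<in> join L1 L2" using 1 A2 unfolding join_def by blast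
      then show False using assms(1) 1 False by blast
    qed
  next
    case (2 A2)
    obtain A1 where A1: "A1 \<in> L1" using assms(2) by blast
    show False
    proof (cases "a \<in> \<Union>L1")
      case True then obtain B where "B \<in> L1" "a \<in> B" by blast
      then have "B \<inter> A2 \<in> join L1 L2" using 2 unfolding join_def by blast
      then show False using assms(1) 2 \<open>a \<in> B\<close> by blast
    next
      case False
      then have "- \<Union>L1 \<inter> A2 \<in> join L1 L2" using 2 A1 unfolding join_def by blast
      then show False using assms(1) 2 False by blast
    qed
  qed
qed

lemma cell_use: "\<forall>A\<in>L. \<forall>a\<in>A. \<forall>b\<in>A. f a = f (b::'a) \<Longrightarrow> A \<in> L \<Longrightarrow> a \<in> A \<Longrightarrow> b \<in> A \<Longrightarrow> f a = (f b :: 'b)"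
  by blast

lemma cells:
  "(\<forall>A\<in>next_lits r. \<forall>a\<in>A. \<forall>b\<in>A. lang (deriv a r) = lang (deriv b r)) \<and>
   (\<forall>a. a \<notin> \<Union>(next_lits r) \<longrightarrow> lang (deriv a r) = {})"
proof (induction r)
  case (Alt r s)
  have ne: "next_lits r \<noteq> {}" "next_lits s \<noteq> {}" by (rule next_ne)+
  show ?case
  proof (intro conjI allI impI ballI)
    fix A a b assume H: "A \<in> next_lits (Alt r s)" "a \<in> A" "b \<in> A"
    have "lang (deriv a r) = lang (deriv b r) \<and> lang (deriv a s) = lang (deriv b s)"
      by (rule join_cell[OF _ H(2,3) conjunct1[OF Alt.IH(1)] conjunct2[OF Alt.IH(1)] conjunct1[OF Alt.IH(2)] conjunct2[OF Alt.IH(2)]]) (use H(1) in simp)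
    then show "lang (deriv a (Alt r s)) = lang (deriv b (Alt r s))" by simp
  next
    fix a assume "a \<notin> \<Union>(next_lits (Alt r s))"
    then have "a \<notin> \<Union>(join (next_lits r) (next_lits s))" by (simp only: next_lits.simps simp_thms)
    then have "a \<notin> \<Union>(next_lits r) \<and> a \<notin> \<Union>(next_lits s)"
      by (rule join_out[OF _ ne])
    then show "lang (deriv a (Alt r s)) = {}" using conjunct2[OF Alt.IH(1)] conjunct2[OF Alt.IH(2)] by simp
  qed
next
  case (Cat r s)
  have ne: "next_lits r \<noteq> {}" "next_lits s \<noteq> {}" by (rule next_ne)+
  show ?case
  proof (cases "nullable r")
    case True
    show ?thesis
    proof (intro conjI allI impI ballI)
      fix A a b assume H: "A \<in> next_lits (Cat r s)" "a \<in> A" "b \<in> A"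
      have "lang (deriv a r) = lang (deriv b r) \<and> lang (deriv a s) = lang (deriv b s)"
        by (rule join_cell[OF _ H(2,3) conjunct1[OF Cat.IH(1)] conjunct2[OF Cat.IH(1)] conjunct1[OF Cat.IH(2)] conjunct2[OF Cat.IH(2)]]) (use H(1) True in simp)
      then show "lang (deriv a (Cat r s)) = lang (deriv b (Cat r s))" using True by simp
    next
      fix a assume "a \<notin> \<Union>(next_lits (Cat r s))"
      then have "a \<notin> \<Union>(join (next_lits r) (next_lits s))" using True by (simp only: next_lits.simps if_True simp_thms)
      then have "a \<notin> \<Union>(next_lits r) \<and> a \<notin> \<Union>(next_lits s)"
        by (rule join_out[OF _ ne])
      then show "lang (deriv a (Cat r s)) = {}" using conjunct2[OF Cat.IH(1)] conjunct2[OF Cat.IH(2)] True by simp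
    qed
  next
    case False
    show ?thesis
    proof (intro conjI allI impI ballI)
      fix A a b assume "A \<in> next_lits (Cat r s)" "a \<in> A" "b \<in> A"
      then have "A \<in> next_lits r" "a \<in> A" "b \<in> A" using False by simp_all
      then have "lang (deriv a r) = lang (deriv b r)" by (rule cell_use[OF conjunct1[OF Cat.IH(1)]])
      then show "lang (deriv a (Cat r s)) = lang (deriv b (Cat r s))" using False by simp
    next
      fix a assume "a \<notin> \<Union>(next_lits (Cat r s))"
      then have "lang (deriv a r) = {}" using conjunct2[OF Cat.IH(1)] False by simp
      then show "lang (deriv a (Cat r s)) = {}" using False by simp
    qed
  qed
next
  case (Star r)
  show ?case
  proof (intro conjI allI impI ballI)
    fix A a b assume "A \<in> next_lits (Star r)" "a \<in> A" "b \<in> A"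
    then have "A \<in> next_lits r" "a \<in> A" "b \<in> A" by simp_all
    then have "lang (deriv a r) = lang (deriv b r)" by (rule cell_use[OF conjunct1[OF Star.IH]])
    then show "lang (deriv a (Star r)) = lang (deriv b (Star r))" by simp
  next
    fix a assume "a \<notin> \<Union>(next_lits (Star r))"
    then have "lang (deriv a r) = {}" using conjunct2[OF Star.IH] by simp
    then show "lang (deriv a (Star r)) = {}" by simp
  qed
next
  case (Inter r s)
  show ?case
  proof (intro conjI allI impI ballI)
    fix A a b assume A: "A \<in> next_lits (Inter r s)" "a \<in> A" "b \<in> A"
    then obtain A1 A2 where "A1 \<in> next_lits r" "A2 \<in> next_lits s" "A = A1 \<inter> A2"
      by (auto simp: meet_def)
    then have "lang (deriv a r) = lang (deriv b r) \<and> lang (deriv a s) = lang (deriv b s)"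
      using cell_use[OF conjunct1[OF Inter.IH(1)]] cell_use[OF conjunct1[OF Inter.IH(2)]] A(2,3) by (metis IntD1 IntD2)
    then show "lang (deriv a (Inter r s)) = lang (deriv b (Inter r s))" by simp
  next
    fix a assume a: "a \<notin> \<Union>(next_lits (Inter r s))"
    have "a \<notin> \<Union>(next_lits r) \<or> a \<notin> \<Union>(next_lits s)"
    proof (rule ccontr)
      assume "\<not> ?thesis"
      then obtain A1 A2 where "A1 \<in> next_lits r" "A2 \<in> next_lits s" "a \<in> A1" "a \<in> A2" by blast
      then have "A1 \<inter> A2 \<in> next_lits (Inter r s)" by (auto simp: meet_def)
      then show False using a \<open>a \<in> A1\<close> \<open>a \<in> A2\<close> by blast
    qed
    then show "lang (deriv a (Inter r s)) = {}" using conjunct2[OF Inter.IH(1)] conjunct2[OF Inter.IH(2)] by auto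
  qed
next
  case (Neg r)
  show ?case
  proof (intro conjI allI impI ballI)
    fix A a b assume A: "A \<in> next_lits (Neg r)" "a \<in> A" "b \<in> A"
    then consider "A \<in> next_lits r" | "A = (\<Inter>A\<in>next_lits r. - A)" by auto
    then have "lang (deriv a r) = lang (deriv b r)"
    proof cases
      case 1 then show ?thesis using A(2,3) by (rule cell_use[OF conjunct1[OF Neg.IH]])
    next
      case 2
      then have "a \<notin> \<Union>(next_lits r)" "b \<notin> \<Union>(next_lits r)" using A by auto
      then show ?thesis using conjunct2[OF Neg.IH] by simp
    qed
    then show "lang (deriv a (Neg r)) = lang (deriv b (Neg r))" by simp
  next
    fix a assume "a \<notin> \<Union>(next_lits (Neg r))"
    then show "lang (deriv a (Neg r)) = {}" by auto
  qed
qed auto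

lemma intU: "literal_family U \<Longrightarrow> A \<in> U \<Longrightarrow> B \<in> U \<Longrightarrow> A \<inter> B \<in> U"
  unfolding literal_family_def by blast
lemma unU: "literal_family U \<Longrightarrow> A \<in> U \<Longrightarrow> B \<in> U \<Longrightarrow> A \<union> B \<in> U"
  unfolding literal_family_def by blast
lemma compU: "literal_family U \<Longrightarrow> A \<in> U \<Longrightarrow> - A \<in> U"
  unfolding literal_family_def by blast
lemma emptyU: "literal_family U \<Longrightarrow> {} \<in> U"
  unfolding literal_family_def by blast

lemma union_in_U:
  assumes "literal_family U" "finite F" "F \<subseteq> U" shows "\<Union>F \<in> U"
  using assms(2,3)
proof (induction F rule: finite_induct)
  case empty then show ?case using emptyU[OF assms(1)] by simp
next
  case (insert x F)
  then have "x \<in> U" "\<Union>F \<in> U" by simp_all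
  then show ?case using unU[OF assms(1)] by simp
qed

lemma fin_pair: "finite L1 \<Longrightarrow> finite L2 \<Longrightarrow> finite {f A1 A2 | A1 A2. A1 \<in> L1 \<and> A2 \<in> L2}"
proof -
  assume "finite L1" "finite L2"
  moreover have "{f A1 A2 | A1 A2. A1 \<in> L1 \<and> A2 \<in> L2} = (\<lambda>p. f (fst p) (snd p)) ` (L1 \<times> L2)" by force
  ultimately show ?thesis by simp
qed

lemma fin_join: "finite L1 \<Longrightarrow> finite L2 \<Longrightarrow> finite (join L1 L2)"
  unfolding join_def using fin_pair[of L1 L2 "\<lambda>x y. x \<inter> y"] fin_pair[of L1 L2 "\<lambda>x y. x \<inter> - \<Union>L2"]
    fin_pair[of L1 L2 "\<lambda>x y. - \<Union>L1 \<inter> y"] by simp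

lemma fin_meet: "finite L1 \<Longrightarrow> finite L2 \<Longrightarrow> finite (meet L1 L2)"
  unfolding meet_def using fin_pair[of L1 L2 "\<lambda>x y. x \<inter> y"] by simp

lemma next_fin: "finite (next_lits r)"
  by (induction r) (simp_all add: fin_join fin_meet)


lemma join_U: assumes U: "literal_family U" and "L1 \<subseteq> U" "L2 \<subseteq> U" "\<Union>L1 \<in> U" "\<Union>L2 \<in> U"
  shows "join L1 L2 \<subseteq> U"
proof -
  have c1: "- \<Union>L1 \<in> U" "- \<Union>L2 \<in> U" using compU[OF U] assms(4,5) by auto
  show ?thesis unfolding join_def using intU[OF U] c1 assms(2,3) by blast
qed

lemma meet_U: assumes U: "literal_family U" and "L1 \<subseteq> U" "L2 \<subseteq> U" shows "meet L1 L2 \<subseteq> U"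
  unfolding meet_def using intU[OF U] assms(2,3) by blast

lemma next_U: assumes U: "literal_family U" shows "lits r \<subseteq> U \<Longrightarrow> next_lits r \<subseteq> U"
proof (induction r)
  case Eps then show ?case using U by (simp add: literal_family_def)
next
  case (Alt r s)
  have "\<Union>(next_lits r) \<in> U" "\<Union>(next_lits s) \<in> U"
    using Alt union_in_U[OF U] next_fin by auto
  then show ?case using Alt join_U[OF U] by simp
next
  case (Cat r s)
  have "\<Union>(next_lits r) \<in> U" "\<Union>(next_lits s) \<in> U"
    using Cat union_in_U[OF U] next_fin by auto
  then show ?case using Cat join_U[OF U] by simp
next
  case (Inter r s)
  then show ?case using meet_U[OF U] by simp
next
  case (Neg r)
  have "\<Union>(next_lits r) \<in> U"
    using Neg union_in_U[OF U] next_fin by auto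
  moreover have "(\<Inter>A\<in>next_lits r. - A) = - \<Union>(next_lits r)" by auto
  ultimately show ?case using Neg compU[OF U] by simp
qed auto

theorem theorem4:
  fixes U :: "'a::countable set set" and ch :: "'a set \<Rightarrow> 'a" and r s :: "'a ere"
  assumes "literal_family U"
    and "\<forall>A\<in>U. A \<noteq> {} \<longrightarrow> ch A \<in> A"
    and "lits r \<subseteq> U" and "lits s \<subseteq> U"
  shows "lang r \<subseteq> lang s \<longleftrightarrow>
           ((nullable r \<longrightarrow> nullable s) \<and>
            (\<forall>A\<in>ljoin (next_lits r) (next_lits s). A \<noteq> {} \<longrightarrow>
               lang (deriv (ch A) r) \<subseteq> lang (deriv (ch A) s)))"
proof
  assume "lang r \<subseteq> lang s"
  then show "(nullable r \<longrightarrow> nullable s) \<and>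
            (\<forall>A\<in>ljoin (next_lits r) (next_lits s). A \<noteq> {} \<longrightarrow>
               lang (deriv (ch A) r) \<subseteq> lang (deriv (ch A) s))"
    by (auto simp: nullable_iff lang_deriv)
next
  assume H: "(nullable r \<longrightarrow> nullable s) \<and>
            (\<forall>A\<in>ljoin (next_lits r) (next_lits s). A \<noteq> {} \<longrightarrow>
               lang (deriv (ch A) r) \<subseteq> lang (deriv (ch A) s))"
  have Ur: "\<Union>(next_lits s) \<in> U" "next_lits r \<subseteq> U" "next_lits s \<subseteq> U"
    using union_in_U[OF assms(1)] next_fin next_U[OF assms(1)] assms(3,4) by auto
  show "lang r \<subseteq> lang s"
  proof
    fix w assume w: "w \<in> lang r"
    show "w \<in> lang s"
    proof (cases w)
      case Nil then show ?thesis using H w by (simp add: nullable_iff)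
    next
      case (Cons a v)
      have v: "v \<in> lang (deriv a r)" using w Cons by (simp add: lang_deriv)
      have "a \<in> \<Union>(next_lits r)"
      proof (rule ccontr)
        assume "a \<notin> \<Union>(next_lits r)"
        then have "lang (deriv a r) = {}" by (rule mp[OF spec[OF conjunct2[OF cells[of r]]]])
        then show False using v by simp
      qed
      then obtain A1 where A1: "A1 \<in> next_lits r" "a \<in> A1" by blast
      show ?thesis
      proof (cases "a \<in> \<Union>(next_lits s)")
        case True
        then obtain A2 where A2: "A2 \<in> next_lits s" "a \<in> A2" by blast
        let ?A = "A1 \<inter> A2"
        have jA: "?A \<in> ljoin (next_lits r) (next_lits s)" using A1 A2 by (auto simp: ljoin_def)
        have uA: "?A \<in> U" using A1 A2 Ur intU[OF assms(1)] by blast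
        have nA: "?A \<noteq> {}" using A1 A2 by auto
        have c: "ch ?A \<in> ?A" using mp[OF bspec[OF assms(2) uA] nA] .
        have inc: "lang (deriv (ch ?A) r) \<subseteq> lang (deriv (ch ?A) s)"
          using mp[OF bspec[OF conjunct2[OF H] jA] nA] .
        have "lang (deriv (ch ?A) r) = lang (deriv a r)" using c A1 by (intro cell_use[OF conjunct1[OF cells[of r]]]) auto
        moreover have "lang (deriv (ch ?A) s) = lang (deriv a s)" using c A2 by (intro cell_use[OF conjunct1[OF cells[of s]]]) auto
        ultimately have "v \<in> lang (deriv a s)" using inc v by auto
        then show ?thesis using Cons by (simp add: lang_deriv)
      next
        case False
        let ?A = "A1 \<inter> - \<Union>(next_lits s)"
        obtain A2 where "A2 \<in> next_lits s" using next_ne by blast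
        then have jA: "?A \<in> ljoin (next_lits r) (next_lits s)" using A1 by (auto simp: ljoin_def)
        have uA: "?A \<in> U" using A1 Ur intU[OF assms(1)] compU[OF assms(1)] by blast
        have nA: "?A \<noteq> {}" using A1 False by auto
        have c: "ch ?A \<in> ?A" using mp[OF bspec[OF assms(2) uA] nA] .
        have inc: "lang (deriv (ch ?A) r) \<subseteq> lang (deriv (ch ?A) s)"
          using mp[OF bspec[OF conjunct2[OF H] jA] nA] .
        have "lang (deriv (ch ?A) r) = lang (deriv a r)" using c A1 by (intro cell_use[OF conjunct1[OF cells[of r]]]) auto
        moreover have "lang (deriv (ch ?A) s) = {}" using c by (intro mp[OF spec[OF conjunct2[OF cells[of s]]]]) auto
        ultimately show ?thesis using inc v by auto
      qed
    qed
  qed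
qed

end
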